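(* Let $N\ge 3$ and let $E\in\{E_r,E_p\}$. There exists a constant $F^*>0$, depending only on $N$ and on whether $E=E_r$ or $E=E_p$, such that for every $\delta<0$, setting $\beta^*=-F^*/\delta>0$: (i) for every $\beta\in(0,\beta^*]$, the function $\theta\mapsto E(\theta)$ is non-decreasing on $\mathbb{R}$; consequently, for every $\theta_0\in\mathbb{R}$, $\min_{\theta\ge\theta_0}E(\theta)=E(\theta_0)$; (ii) for every $\beta>\beta^*$, the function $\theta\mapsto E(\theta)$ is not monotonic on $\mathbb{R}$.
   Context: For an integer $N\ge 2$, $\delta<0$, $\beta>0$ and $\theta\in\mathbb{R}$, put $x=\beta(\theta+\delta)$; for $1\le i\le N-1$ define $u_{i,i+1}=\frac{i(N-i)}{N^2}(1+e^{-x})^{-1}$, $u_{i,i-1}=\frac{i(N-i)}{N^2}(1+e^{x})^{-1}$, $u_{i,i}=1-u_{i,i+1}-u_{i,i-1}$, $u_{i,j}=0$ for $|i-j|\ge2$; let $U=(u_{ij})_{i,j=1}^{N-1}$, $(n_{ij})_{i,j=1}^{N-1}=(I-U)^{-1}$, and $E_r(\theta)=\frac{\theta}{2}\sum_{i=1}^{N-1}(n_{1i}+n_{N-1,i})\,i$, $E_p(\theta)=\frac{\theta}{2}\sum_{i=1}^{N-1}(n_{1i}+n_{N-1,i})(N-i)$ (these depend on $N,\delta,\beta$). In applications $\theta_0$ is the minimal incentive $\frac{1}{(N-1)\beta}\log\frac{\omega}{1-\omega}-\delta$ guaranteeing a cooperation frequency of at least $\omega\in(0,1)$. *)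

theory Defs
  imports "HOL-Analysis.Analysis" "Jordan_Normal_Form.Gauss_Jordan_Elimination"
begin

text \<open>Transition probabilities u_{ij} (1-indexed, i,j in 1..N-1), with x = beta*(theta+delta).\<close>
definition trans_u :: "nat \<Rightarrow> real \<Rightarrow> real \<Rightarrow> real \<Rightarrow> nat \<Rightarrow> nat \<Rightarrow> real" where
  "trans_u N \<delta> \<beta> \<theta> i j =
     (let x = \<beta> * (\<theta> + \<delta>);
          c = real i * (real N - real i) / (real N)^2;
          up = c / (1 + exp (- x));
          down = c / (1 + exp x)
      in if j = i + 1 then up
         else if j + 1 = i then down
         else if j = i then 1 - up - down
         else 0)"

definition U_mat :: "nat \<Rightarrow> real \<Rightarrow> real \<Rightarrow> real \<Rightarrow> real mat" where
  "U_mat N \<delta> \<beta> \<theta> = mat (N - 1) (N - 1) (\<lambda>(a, b). trans_u N \<delta> \<beta> \<theta> (a + 1) (b + 1))"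

definition fund_mat :: "nat \<Rightarrow> real \<Rightarrow> real \<Rightarrow> real \<Rightarrow> real mat" where
  "fund_mat N \<delta> \<beta> \<theta> = the (mat_inverse (1\<^sub>m (N - 1) - U_mat N \<delta> \<beta> \<theta>))"

definition n_entry :: "nat \<Rightarrow> real \<Rightarrow> real \<Rightarrow> real \<Rightarrow> nat \<Rightarrow> nat \<Rightarrow> real" where
  "n_entry N \<delta> \<beta> \<theta> i j = fund_mat N \<delta> \<beta> \<theta> $$ (i - 1, j - 1)"

definition E_r :: "nat \<Rightarrow> real \<Rightarrow> real \<Rightarrow> real \<Rightarrow> real" where
  "E_r N \<delta> \<beta> \<theta> = \<theta> / 2 * (\<Sum>i = 1..N - 1.
      (n_entry N \<delta> \<beta> \<theta> 1 i + n_entry N \<delta> \<beta> \<theta> (N - 1) i) * real i)"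

definition E_p :: "nat \<Rightarrow> real \<Rightarrow> real \<Rightarrow> real \<Rightarrow> real" where
  "E_p N \<delta> \<beta> \<theta> = \<theta> / 2 * (\<Sum>i = 1..N - 1.
      (n_entry N \<delta> \<beta> \<theta> 1 i + n_entry N \<delta> \<beta> \<theta> (N - 1) i) * (real N - real i))"

end

theory Submission
  imports Defs "Jordan_Normal_Form.Determinant"
begin


definition SS :: "nat \<Rightarrow> real \<Rightarrow> real" where "SS n r = (\<Sum>k<n. r^k)"
definition S1 :: "nat \<Rightarrow> real \<Rightarrow> real" where "S1 n r = (\<Sum>k<n. real k * r^k)"

lemma SS_0[simp]: "SS 0 r = 0" by (simp add: SS_def)
lemma SS_Suc: "SS (Suc n) r = SS n r + r^n" by (simp add: SS_def)
lemma SS_Suc': "SS (Suc n) r = 1 + r * SS n r"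
  unfolding SS_def by (subst sum.lessThan_Suc_shift) (simp add: sum_distrib_left)
lemma S1_Suc: "S1 (Suc n) r = S1 n r + real n * r^n" by (simp add: S1_def)

lemma SS_nonneg: "r \<ge> 0 \<Longrightarrow> SS n r \<ge> 0" by (simp add: SS_def sum_nonneg)
lemma SS_pos: "r \<ge> 0 \<Longrightarrow> n \<ge> 1 \<Longrightarrow> SS n r > 0"
  by (induction n) (auto simp: SS_Suc' intro!: add_pos_nonneg mult_nonneg_nonneg SS_nonneg)
lemma SS_add: "SS (a + b) r = SS a r + r^a * SS b r"
  by (induction b) (auto simp: SS_Suc algebra_simps power_add)
lemma SS_mono: "r \<ge> 0 \<Longrightarrow> a \<le> b \<Longrightarrow> SS a r \<le> SS b r"
  using SS_add[of a "b-a" r] by (auto intro!: mult_nonneg_nonneg SS_nonneg)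

lemma S1_le: "r \<ge> 0 \<Longrightarrow> S1 n r \<le> real n * SS n r"
  unfolding S1_def SS_def sum_distrib_left by (rule sum_mono) (auto intro!: mult_right_mono)

lemma Psi_eq: "(\<Sum>k<m. (real m - real k) * r^k) = (\<Sum>j<m. SS (Suc j) r)"
proof (induction m)
  case (Suc m)
  have "(\<Sum>k<Suc m. (real (Suc m) - real k) * r^k) = (\<Sum>k<Suc m. (real m - real k) * r^k + r^k)"
    by (rule sum.cong) (auto simp: algebra_simps)
  also have "\<dots> = (\<Sum>k<m. (real m - real k) * r^k) + SS (Suc m) r"
    by (simp add: sum.distrib SS_def)
  finally show ?case using Suc by simp
qed simp

lemma mS_minus_S1: assumes "r \<ge> 0" "m \<le> n"
  shows "real m * SS n r - S1 n r \<le> (\<Sum>j<m. SS (Suc j) r)"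
proof -
  have "real m * SS n r - S1 n r = (\<Sum>k<n. (real m - real k) * r^k)"
    by (simp add: SS_def S1_def sum_distrib_left sum_subtractf algebra_simps)
  also have "\<dots> \<le> (\<Sum>k<n. if k < m then (real m - real k) * r^k else 0)"
    by (rule sum_mono) (auto intro!: mult_nonpos_nonneg simp: assms)
  also have "\<dots> = (\<Sum>k\<in>{..<n} \<inter> {k. k<m}. (real m - real k) * r^k)"
    by (simp add: sum.inter_restrict)
  also have "{..<n} \<inter> {k. k<m} = {..<m}" using assms by auto
  finally show ?thesis by (simp add: Psi_eq)
qed

lemma rm_Psi: assumes "r \<ge> 0"
  shows "r^m * (\<Sum>j<m. SS (Suc j) r) \<le> r * (SS m r)^2"
proof -
  have "r^m * (\<Sum>j<m. SS (Suc j) r) = (\<Sum>j<m. r * r^j * (r^(m - Suc j) * SS (Suc j) r))"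
    unfolding sum_distrib_left
  proof (rule sum.cong)
    fix j assume "j \<in> {..<m}"
    hence "m = Suc j + (m - Suc j)" by auto
    hence "r^m = r * r^j * r^(m - Suc j)" by (metis power_Suc power_add mult.assoc)
    thus "r ^ m * SS (Suc j) r = r * r ^ j * (r ^ (m - Suc j) * SS (Suc j) r)" by simp
  qed simp
  also have "\<dots> \<le> (\<Sum>j<m. r * r^j * SS m r)"
  proof (rule sum_mono)
    fix j assume "j \<in> {..<m}"
    hence e: "m = (m - Suc j) + Suc j" by auto
    have "r^(m - Suc j) * SS (Suc j) r \<le> SS m r"
      using SS_add[of "m - Suc j" "Suc j" r] e SS_nonneg[OF assms, of "m - Suc j"] by simp
    thus "r * r ^ j * (r ^ (m - Suc j) * SS (Suc j) r) \<le> r * r ^ j * SS m r"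
      by (intro mult_left_mono) (auto simp: assms)
  qed
  also have "\<dots> = r * (SS m r)^2" by (simp add: SS_def sum_distrib_left sum_distrib_right power2_eq_square algebra_simps)
  finally show ?thesis .
qed

lemma L1poly: assumes r: "r \<ge> 0" and mn: "m < n"
  shows "(S1 n r + real m * r^m) * (SS n r + r^n) - (SS n r + r^m) * (S1 n r + real n * r^n)
    \<le> r * ((SS n r + r^m) * (SS n r + r^n))"
proof -
  define s where "s = SS n r"
  define t where "t = S1 n r"
  have s0: "s \<ge> 0" using SS_nonneg[OF r] by (simp add: s_def)
  have eq: "(t + real m * r^m) * (s + r^n) - (s + r^m) * (t + real n * r^n)
     = r^n * (t - real n * s) + r^m * (real m * s - t) - (real n - real m) * (r^m * r^n)"
    by (simp add: algebra_simps)
  have a: "r^n * (t - real n * s) \<le> 0" using S1_le[OF r, of n] r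
    by (auto simp: s_def t_def intro!: mult_nonneg_nonpos)
  have b: "(real n - real m) * (r^m * r^n) \<ge> 0" using mn r by auto
  have c: "r^m * (real m * s - t) \<le> r^m * (\<Sum>j<m. SS (Suc j) r)"
    using mS_minus_S1[OF r, of m n] mn r by (auto simp: s_def t_def intro!: mult_left_mono)
  have d: "r * (SS m r)^2 \<le> r * s^2"
    using SS_mono[OF r, of m n] mn SS_nonneg[OF r, of m] r
    by (auto simp: s_def intro!: mult_left_mono power_mono)
  have e: "r * s^2 \<le> r * ((s + r^m) * (s + r^n))"
    using r s0 by (auto intro!: mult_left_mono mult_mono simp: power2_eq_square)
  show ?thesis unfolding s_def[symmetric] t_def[symmetric] eq
    using a b c d e rm_Psi[OF r, of m] by linarith
qed



definition SSd :: "nat \<Rightarrow> real \<Rightarrow> real" where "SSd n r = (\<Sum>k<n. real k * r^(k - 1))"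

lemma SSd_Suc: "SSd (Suc n) r = SSd n r + real n * r^(n-1)" by (simp add: SSd_def)

lemma DERIV_SS: "(SS n has_real_derivative SSd n r) (at r)"
proof (induction n)
  case 0 show ?case by (simp add: SS_def[abs_def] SSd_def)
next
  case (Suc n)
  have "((\<lambda>r. SS n r + r^n) has_real_derivative SSd n r + real n * r^(n - Suc 0)) (at r)"
    by (intro DERIV_add Suc DERIV_pow)
  thus ?case by (simp add: SS_Suc[abs_def] SSd_Suc)
qed

lemma r_SSd: "r * SSd n r = S1 n r"
  unfolding SSd_def S1_def sum_distrib_left
proof (rule sum.cong)
  fix k assume "k \<in> {..<n}"
  show "r * (real k * r ^ (k - 1)) = real k * r ^ k"
    by (cases k) auto
qed simp

definition phi :: "nat \<Rightarrow> nat \<Rightarrow> real \<Rightarrow> real" where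
  "phi n m r = (1 + r) * (SS n r + r^m) / SS (Suc n) r"

definition dphi :: "nat \<Rightarrow> nat \<Rightarrow> real \<Rightarrow> real" where
  "dphi n m r = ((SS n r + r^m + (1 + r) * (SSd n r + real m * r^(m - 1))) * SS (Suc n) r
      - (1 + r) * (SS n r + r^m) * SSd (Suc n) r) / (SS (Suc n) r)^2"

lemma DERIV_phi: assumes "SS (Suc n) r \<noteq> 0"
  shows "(phi n m has_real_derivative dphi n m r) (at r)"
proof -
  have "((\<lambda>r. (1 + r) * (SS n r + r^m) / SS (Suc n) r) has_real_derivative
     (((0 + 1) * (SS n r + r^m) + (SSd n r + real m * r^(m - Suc 0)) * (1 + r)) * SS (Suc n) r
       - (1 + r) * (SS n r + r^m) * SSd (Suc n) r) / (SS (Suc n) r * SS (Suc n) r)) (at r)"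
    apply (rule DERIV_divide)
      apply (rule DERIV_mult)
       apply (rule DERIV_add[OF DERIV_const DERIV_ident])
      apply (rule DERIV_add[OF DERIV_SS DERIV_pow])
     apply (rule DERIV_SS)
    apply (rule assms)
    done
  thus ?thesis by (simp add: phi_def[abs_def] dphi_def power2_eq_square mult.commute[of "SSd n r + _" "1 + r"])
qed

lemma phi_pos: "r \<ge> 0 \<Longrightarrow> n \<ge> 1 \<Longrightarrow> phi n m r > 0"
  unfolding phi_def using SS_pos[of r n] SS_pos[of r "Suc n"]
  by (auto intro!: divide_pos_pos mult_pos_pos add_pos_nonneg)

lemma dphi_le: assumes r: "r > 0" and mn: "m < n"
  shows "dphi n m r \<le> 2 * phi n m r"
proof -
  define W where "W = SS n r + r^m"
  define Wd where "Wd = SSd n r + real m * r^(m - 1)"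
  define S where "S = SS (Suc n) r"
  define Sd where "Sd = SSd (Suc n) r"
  have n1: "n \<ge> 1" using mn by auto
  have S0: "S > 0" using SS_pos[of r "Suc n"] r by (simp add: S_def)
  have W0: "W > 0" using SS_pos[of r n] r n1 by (simp add: W_def add_pos_nonneg)
  have rWd: "r * Wd = S1 n r + real m * r^m"
    by (cases m) (auto simp: Wd_def algebra_simps r_SSd)
  have rSd: "r * Sd = S1 n r + real n * r^n"
    using r_SSd[of r "Suc n"] by (simp add: Sd_def S1_Suc)
  have "r * (Wd * S - W * Sd) = (r * Wd) * S - W * (r * Sd)" by (simp add: algebra_simps)
  also have "\<dots> \<le> r * (W * S)" unfolding rWd rSd W_def S_def SS_Suc
    using L1poly[of r m n] r mn by simp
  finally have key: "Wd * S - W * Sd \<le> W * S" using r by simp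
  have "dphi n m r = (W * S + (1 + r) * (Wd * S - W * Sd)) / S^2"
    by (simp add: dphi_def W_def Wd_def S_def Sd_def algebra_simps)
  also have "\<dots> \<le> (W * S + (1 + r) * (W * S)) / S^2"
    using key r S0 by (intro divide_right_mono add_left_mono mult_left_mono) auto
  also have "\<dots> \<le> 2 * phi n m r"
  proof -
    have "W * S \<le> (1 + r) * (W * S)" using r W0 S0 by (simp add: algebra_simps)
    hence "(W * S + (1 + r) * (W * S)) / S^2 \<le> (2 * ((1 + r) * (W * S))) / S^2"
      using S0 by (intro divide_right_mono) (auto simp: algebra_simps)
    also have "\<dots> = 2 * phi n m r" using S0
      by (simp add: phi_def W_def S_def power2_eq_square)
    finally show ?thesis .
  qed
  finally show ?thesis .
qed

lemma SS_inv: assumes "r \<noteq> 0" shows "r^k * SS (Suc k) (1/r) = SS (Suc k) r"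
proof (induction k)
  case 0 show ?case by (simp add: SS_def)
next
  case (Suc k)
  have "r^(Suc k) * SS (Suc (Suc k)) (1/r) = r^(Suc k) + r^k * (r * (1/r)) * SS (Suc k) (1/r)"
    by (subst SS_Suc') (simp add: algebra_simps)
  also have "\<dots> = r^(Suc k) + SS (Suc k) r" using assms Suc by simp
  finally show ?case by (simp add: SS_Suc)
qed

lemma phi_sym: assumes r: "r > 0" and mn: "m < n"
  shows "phi n m r = phi n (n - 1 - m) (1/r)"
proof -
  obtain k where k: "n = Suc k" using mn by (cases n) auto
  have e1: "SS n (1/r) = SS n r / r^k" using SS_inv[of r k] r k by (simp add: field_simps)
  have e2: "SS (Suc n) (1/r) = SS (Suc n) r / r^n" using SS_inv[of r n] r by (simp add: field_simps)
  have e3: "(1/r)^(n - 1 - m) = r^m / r^k"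
  proof -
    have "k = m + (n - 1 - m)" using mn k by auto
    hence "r^k = r^m * r^(n-1-m)" by (metis power_add)
    thus ?thesis using r by (simp add: field_simps power_divide)
  qed
  have S0: "SS (Suc n) r > 0" using SS_pos[of r "Suc n"] r by simp
  have rn: "r^n = r * r^k" using k by simp
  have pk: "r^k > 0" using r by simp
  have W0: "SS n r / r ^ k + r ^ m / r ^ k = (SS n r + r^m) / r^k" by (simp add: add_divide_distrib)
  show ?thesis unfolding phi_def e1 e2 e3 W0 rn
    using r S0 pk by (simp add: field_simps)
qed

lemma dphi_ge: assumes r: "r > 0" and mn: "m < n"
  shows "r^2 * dphi n m r \<ge> -2 * phi n m r"
proof -
  define m' where "m' = n - 1 - m"
  have m'n: "m' < n" using mn by (auto simp: m'_def)
  have S0: "SS (Suc n) y \<noteq> 0" if "y > 0" for y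
    using SS_pos[of y "Suc n"] that by simp
  have d1: "((\<lambda>y. phi n m' (1/y)) has_real_derivative dphi n m' (1/r) * (- 1 / r^2)) (at r)"
  proof -
    have "((\<lambda>y. inverse y) has_real_derivative - (inverse r ^ 2)) (at r)"
      using r DERIV_inverse[of r] by (simp add: power2_eq_square)
    hence dinv: "((\<lambda>y. 1/y) has_real_derivative - 1 / r^2) (at r)"
      by (simp add: inverse_eq_divide power_one_over)
    have ir: "1/r > 0" using r by simp
    from DERIV_chain2[OF DERIV_phi[OF S0[OF ir]] dinv] show ?thesis .
  qed
  have d2: "(phi n m has_real_derivative dphi n m' (1/r) * (- 1 / r^2)) (at r)"
  proof (rule has_field_derivative_transform_within_open[OF d1, of "{0<..}"])
    fix y :: real assume "y \<in> {0<..}"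
    thus "phi n m' (1 / y) = phi n m y"
      using phi_sym[of y m n] mn by (simp add: m'_def)
  qed (use r in auto)
  have eq: "dphi n m r = dphi n m' (1/r) * (- 1 / r^2)"
    using DERIV_unique[OF DERIV_phi[OF S0[OF r]] d2] .
  have "dphi n m' (1/r) \<le> 2 * phi n m' (1/r)" using dphi_le[of "1/r" m' n] r m'n by simp
  moreover have "phi n m' (1/r) = phi n m r" using phi_sym[OF r mn] by (simp add: m'_def)
  ultimately have "dphi n m' (1/r) \<le> 2 * phi n m r" by simp
  hence "r^2 * (dphi n m' (1 / r) * (- 1 / r^2)) \<ge> -2 * phi n m r"
    using r by (simp add: power2_eq_square)
  thus ?thesis unfolding eq .
qed



definition Gs :: "nat \<Rightarrow> (nat \<Rightarrow> real) \<Rightarrow> real \<Rightarrow> real" where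
  "Gs n f r = (\<Sum>i\<in>{1..n}. f i * phi n (n - i) r)"
definition dGs :: "nat \<Rightarrow> (nat \<Rightarrow> real) \<Rightarrow> real \<Rightarrow> real" where
  "dGs n f r = (\<Sum>i\<in>{1..n}. f i * dphi n (n - i) r)"

lemma DERIV_Gs: assumes "SS (Suc n) r \<noteq> 0"
  shows "(Gs n f has_real_derivative dGs n f r) (at r)"
  unfolding Gs_def[abs_def] dGs_def
  by (intro DERIV_sum DERIV_cmult DERIV_phi assms)

lemma Gs_pos: assumes "r \<ge> 0" "n \<ge> 1" "\<And>i. 1 \<le> i \<Longrightarrow> i \<le> n \<Longrightarrow> f i > 0"
  shows "Gs n f r > 0"
  unfolding Gs_def using assms
  by (intro sum_pos) (auto intro!: mult_pos_pos phi_pos)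

lemma dGs_le: assumes "r > 0" "\<And>i. 1 \<le> i \<Longrightarrow> i \<le> n \<Longrightarrow> f i > 0"
  shows "dGs n f r \<le> 2 * Gs n f r"
  unfolding Gs_def dGs_def sum_distrib_left
proof (rule sum_mono)
  fix i assume i: "i \<in> {1..n}"
  have "dphi n (n - i) r \<le> 2 * phi n (n - i) r" using i assms(1) by (intro dphi_le) auto
  thus "f i * dphi n (n - i) r \<le> 2 * (f i * phi n (n - i) r)"
    using assms(2)[of i] i by (auto simp: algebra_simps intro: mult_left_mono)
qed

lemma dGs_ge: assumes "r > 0" "\<And>i. 1 \<le> i \<Longrightarrow> i \<le> n \<Longrightarrow> f i > 0"
  shows "r^2 * dGs n f r \<ge> -2 * Gs n f r"
  unfolding Gs_def dGs_def sum_distrib_left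
proof (rule sum_mono)
  fix i assume i: "i \<in> {1..n}"
  have "r^2 * dphi n (n - i) r \<ge> -2 * phi n (n - i) r" using i assms(1) by (intro dphi_ge) auto
  hence "f i * (-2 * phi n (n - i) r) \<le> f i * (r^2 * dphi n (n - i) r)"
    using assms(2)[of i] i by (intro mult_left_mono) auto
  thus "-2 * (f i * phi n (n - i) r) \<le> r^2 * (f i * dphi n (n - i) r)"
    by (simp add: algebra_simps)
qed

lemma SS_at0: "n \<ge> 1 \<Longrightarrow> SS n 0 = 1"
  by (cases n) (auto simp: SS_Suc')

lemma SSd_at0: "n \<ge> 2 \<Longrightarrow> SSd n 0 = 1"
proof (induction n rule: nat_induct_at_least)
  case base show ?case by (simp add: SSd_def eval_nat_numeral)
next
  case (Suc n) thus ?case by (simp add: SSd_Suc)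
qed

lemma dphi_at0: assumes "n \<ge> 2" shows "dphi n m 0 > 0"
proof -
  have "dphi n m 0 = (SS n 0 + 0^m + (SSd n 0 + real m * 0^(m-1))) - (SS n 0 + 0^m)"
    using SS_at0[of "Suc n"] SSd_at0[of "Suc n"] assms by (simp add: dphi_def)
  also have "\<dots> = 1 + real m * 0^(m-1)" using SSd_at0[of n] assms by simp
  also have "\<dots> > 0" by (simp add: add_pos_nonneg)
  finally show ?thesis .
qed

lemma isCont_SS: "isCont (SS n) x"
  using DERIV_SS DERIV_isCont by blast

lemma isCont_SSd: "isCont (SSd n) x"
  unfolding SSd_def[abs_def] by (intro continuous_intros)

lemma isCont_dGs: assumes "SS (Suc n) x \<noteq> 0" shows "isCont (dGs n f) x"
  unfolding dGs_def[abs_def] dphi_def[abs_def]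
  using assms by (intro continuous_intros isCont_SS isCont_SSd) auto

lemma dGs_pos_somewhere: assumes "n \<ge> 2" "\<And>i. 1 \<le> i \<Longrightarrow> i \<le> n \<Longrightarrow> f i > 0"
  shows "\<exists>r>0. dGs n f r > 0"
proof -
  have "dGs n f 0 > 0" unfolding dGs_def using assms
    by (intro sum_pos) (auto intro!: mult_pos_pos dphi_at0)
  moreover have "isCont (dGs n f) 0" using SS_at0[of "Suc n"] by (intro isCont_dGs) auto
  ultimately obtain d where d: "d > 0" "\<And>x. x \<noteq> 0 \<and> \<bar>0 - x\<bar> < d \<Longrightarrow> 0 < dGs n f x"
    using LIM_fun_gt_zero[of "dGs n f" "dGs n f 0" 0] unfolding isCont_def by blast
  show ?thesis using d(1) d(2)[of "d/2"] by (intro exI[of _ "d/2"]) auto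
qed



lemma mono_iff_deriv:
  fixes h h' :: "real \<Rightarrow> real"
  assumes d: "\<And>t. (h has_real_derivative h' t) (at t)"
  shows "mono h \<longleftrightarrow> (\<forall>t. h' t \<ge> 0)"
proof
  assume m: "mono h"
  show "\<forall>t. h' t \<ge> 0"
  proof (rule ccontr)
    assume "\<not> (\<forall>t. h' t \<ge> 0)"
    hence "\<exists>t. h' t < 0" by (simp add: not_le)
    then obtain t where "h' t < 0" ..
    from DERIV_neg_dec_right[OF d this] obtain e where "e > 0" "\<And>k. k > 0 \<Longrightarrow> k < e \<Longrightarrow> h t > h (t + k)"
      by blast
    hence "h t > h (t + e/2)" by simp
    moreover have "h t \<le> h (t + e/2)" using m \<open>e > 0\<close> by (auto intro: monoD)
    ultimately show False by simp
  qed
next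
  assume nn: "\<forall>t. h' t \<ge> 0"
  show "mono h"
  proof (rule monoI)
    fix a b :: real assume ab: "a \<le> b"
    show "h a \<le> h b"
    proof (rule DERIV_nonneg_imp_nondecreasing[OF ab])
      fix x show "\<exists>y. (h has_real_derivative y) (at x) \<and> 0 \<le> y" using d nn by blast
    qed
  qed
qed

lemma exp_34: "exp (3/4 :: real) \<ge> 2"
proof -
  have "1 + 3/4 + (3/4)^2/2 \<le> exp (3/4 :: real)" by (rule exp_lower_Taylor_quadratic) simp
  thus ?thesis by (simp add: power2_eq_square)
qed

lemma t_exp_bound: "(t::real) * exp (- t) \<le> exp (-1)"
proof -
  have "t \<le> exp (t - 1)" using exp_ge_add_one_self[of "t - 1"] by simp
  hence "t * exp (-t) \<le> exp (t - 1) * exp (-t)" by (intro mult_right_mono) auto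
  also have "\<dots> = exp (-1)" by (simp add: exp_add[symmetric])
  finally show ?thesis .
qed

lemma main_abstract:
  fixes g g' :: "real \<Rightarrow> real"
  assumes deriv: "\<And>x. (g has_real_derivative g' x) (at x)"
    and pos: "\<And>x. g x > 0"
    and Kp: "\<And>x. g' x \<ge> -2 * exp (-x) * g x"
    and Km: "\<And>x. g' x \<le> 2 * exp x * g x"
    and neg: "g' x0 < 0"
  shows "\<exists>F>0. \<forall>D>0. (D \<le> F \<longrightarrow> mono (\<lambda>t. t * g (t - D))) \<and> (F < D \<longrightarrow> \<not> mono (\<lambda>t. t * g (t - D)))"
proof -
  define P where "P D t = g (t - D) + t * g' (t - D)" for D t
  have dH: "((\<lambda>t. t * g (t - D)) has_real_derivative P D t) (at t)" for D t
  proof -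
    have "((\<lambda>t. t - D) has_real_derivative 1 - 0) (at t)" by (intro DERIV_diff DERIV_ident DERIV_const)
    from DERIV_chain2[OF deriv this] have "((\<lambda>t. g (t - D)) has_real_derivative g' (t - D)) (at t)" by simp
    from DERIV_mult[OF DERIV_ident this] show ?thesis by (simp add: P_def algebra_simps)
  qed
  have monoP: "mono (\<lambda>t. t * g (t - D)) \<longleftrightarrow> (\<forall>t. P D t \<ge> 0)" for D
    by (rule mono_iff_deriv[OF dH])
  have negt: "P D t \<ge> 0" if "t \<le> 0" "D \<ge> 0" for D t
  proof (cases "g' (t - D) \<le> 0")
    case True
    hence "t * g' (t - D) \<ge> 0" using that by (simp add: mult_nonpos_nonpos)
    thus ?thesis using pos[of "t - D"] by (simp add: P_def)
  next
    case False
    have e1: "exp (t - D) \<le> exp t" using that by simp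
    have "g' (t - D) \<le> 2 * exp (t - D) * g (t - D)" by (rule Km)
    hence "t * g' (t - D) \<ge> t * (2 * exp (t - D) * g (t - D))" using that by (intro mult_left_mono_neg) auto
    moreover have "t * (2 * exp (t - D) * g (t - D)) \<ge> t * (2 * exp t * g (t - D))"
      using that e1 pos[of "t - D"] by (intro mult_left_mono_neg) auto
    moreover have "(-t) * exp t \<le> exp (-1)" using t_exp_bound[of "-t"] by simp
    moreover have "exp (-1::real) \<le> 1/2"
    proof -
      have "exp (1::real) \<ge> 2" using exp_ge_add_one_self[of 1] by simp
      thus ?thesis by (simp add: exp_minus field_simps)
    qed
    ultimately have "t * g' (t - D) \<ge> - g (t - D)"
    proof -
      assume a: "t * g' (t - D) \<ge> t * (2 * exp (t - D) * g (t - D))"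
        "t * (2 * exp (t - D) * g (t - D)) \<ge> t * (2 * exp t * g (t - D))"
        "(-t) * exp t \<le> exp (-1)" "exp (-1::real) \<le> 1/2"
      have "(-t) * exp t * g (t - D) \<le> 1/2 * g (t - D)"
        using a(3,4) pos[of "t - D"] by (intro mult_right_mono) auto
      thus ?thesis using a(1,2) by (simp add: algebra_simps)
    qed
    thus ?thesis by (simp add: P_def)
  qed
  have posdec: "P D' t \<ge> 0" if "t > 0" "0 < D'" "D' \<le> D" "P D (t + (D - D')) \<ge> 0" for D D' t
  proof (cases "g' (t - D') \<ge> 0")
    case True thus ?thesis using that pos[of "t - D'"] by (simp add: P_def)
  next
    case False
    have "t + (D - D') - D = t - D'" by simp
    hence "g (t - D') + (t + (D - D')) * g' (t - D') \<ge> 0" using that(4) by (simp add: P_def)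
    moreover have "(t + (D - D')) * g' (t - D') \<le> t * g' (t - D')"
      using False that by (intro mult_right_mono_neg) auto
    ultimately show ?thesis by (simp add: P_def)
  qed
  have small: "P (1/4) t \<ge> 0" for t
  proof (cases "t \<le> 0")
    case True thus ?thesis using negt by simp
  next
    case False
    have "g' (t - 1/4) \<ge> -2 * exp (-(t - 1/4)) * g (t - 1/4)" by (rule Kp)
    hence "t * g' (t - 1/4) \<ge> t * (-2 * exp (-(t - 1/4)) * g (t - 1/4))"
      using False by (intro mult_left_mono) auto
    moreover have "t * exp (-(t - 1/4)) = exp (1/4) * (t * exp (-t))"
      by (simp add: exp_add[symmetric])
    moreover have "exp (1/4) * (t * exp (-t)) \<le> exp (1/4) * exp (-1)"
      using t_exp_bound[of t] by simp
    moreover have "exp (1/4) * exp (-1) \<le> (1/2::real)"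
    proof -
      have "exp (1/4) * exp (-1) = exp (-(3/4::real))" by (simp add: exp_add[symmetric])
      also have "\<dots> = inverse (exp (3/4))" by (simp add: exp_minus)
      also have "\<dots> \<le> inverse 2" by (rule le_imp_inverse_le[OF exp_34]) simp
      finally show ?thesis by simp
    qed
    ultimately have "t * g' (t - 1/4) \<ge> - g (t - 1/4)"
    proof -
      assume a: "t * g' (t - 1/4) \<ge> t * (-2 * exp (-(t - 1/4)) * g (t - 1/4))"
        "t * exp (-(t - 1/4)) = exp (1/4) * (t * exp (-t))"
        "exp (1/4) * (t * exp (-t)) \<le> exp (1/4) * exp (-1)" "exp (1/4) * exp (-1) \<le> (1/2::real)"
      have "t * exp (-(t - 1/4)) \<le> 1/2" using a(2,3,4) by linarith
      hence "t * exp (-(t - 1/4)) * g (t - 1/4) \<le> 1/2 * g (t - 1/4)"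
        using pos[of "t - 1/4"] by (intro mult_right_mono) auto
      thus ?thesis using a(1) by (simp add: algebra_simps)
    qed
    thus ?thesis by (simp add: P_def)
  qed
  define D1 where "D1 = \<bar>x0\<bar> + g x0 / (- g' x0) + 1"
  have large: "\<not> mono (\<lambda>t. t * g (t - D))" if "D \<ge> D1" for D
  proof -
    have "x0 + D > g x0 / (- g' x0)" using that by (simp add: D1_def)
    hence "(x0 + D) * (- g' x0) > g x0" using neg by (simp add: field_simps)
    hence "P D (x0 + D) < 0" by (simp add: P_def algebra_simps)
    thus ?thesis unfolding monoP using not_le by blast
  qed
  define SS where "SS = {D. D > 0 \<and> mono (\<lambda>t. t * g (t - D))}"
  have q: "1/4 \<in> SS" using small monoP by (simp add: SS_def)
  have bdd: "bdd_above SS"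
  proof (rule bdd_aboveI[of _ D1])
    fix D assume "D \<in> SS"
    hence "mono (\<lambda>t. t * g (t - D))" by (simp add: SS_def)
    thus "D \<le> D1" using large[of D] by linarith
  qed
  define F where "F = Sup SS"
  have F14: "F \<ge> 1/4" unfolding F_def using q bdd by (rule cSup_upper)
  have inS: "P D2 t \<ge> 0" if "D2 \<in> SS" for D2 t using that monoP by (simp add: SS_def)
  show ?thesis
  proof (intro exI[of _ F] conjI allI impI)
    show "F > 0" using F14 by simp
  next
    fix D :: real assume D0: "D > 0" and DF: "D \<le> F"
    show "mono (\<lambda>t. t * g (t - D))"
      unfolding monoP
    proof
      fix t
      show "P D t \<ge> 0"
      proof (cases "t \<le> 0")
        case True thus ?thesis using negt D0 by simp
      next
        case tpos: False
        define x where "x = t - D"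
        show ?thesis
        proof (cases "g' x \<ge> 0")
          case True thus ?thesis using tpos pos[of x] by (simp add: P_def x_def)
        next
          case gneg: False
          show ?thesis
          proof (rule ccontr)
            assume "\<not> P D t \<ge> 0"
            hence c: "g x + t * g' x < 0" by (simp add: P_def x_def)
            define eps where "eps = - (g x + t * g' x) / (- g' x)"
            have eps0: "eps > 0" unfolding eps_def using c gneg by (intro divide_pos_pos) auto
            have "D - eps < Sup SS" using DF eps0 by (simp add: F_def)
            then obtain D2 where D2: "D2 \<in> SS" "D - eps < D2"
              using less_cSup_iff[of SS "D - eps"] q bdd by blast
            have "P D2 (x + D2) \<ge> 0" using inS[OF D2(1)] .
            hence "g x + (x + D2) * g' x \<ge> 0" by (simp add: P_def)
            moreover have "(x + D2) * g' x < (t - eps) * g' x"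
              using D2(2) gneg by (intro mult_strict_right_mono_neg) (auto simp: x_def)
            moreover have "(t - eps) * g' x = t * g' x - (g x + t * g' x)"
              using gneg by (simp add: eps_def field_simps)
            ultimately show False using c by linarith
          qed
        qed
      qed
    qed
  next
    fix D :: real assume D0: "D > 0" and FD: "F < D"
    show "\<not> mono (\<lambda>t. t * g (t - D))"
    proof
      assume "mono (\<lambda>t. t * g (t - D))"
      hence "D \<in> SS" using D0 by (simp add: SS_def)
      hence "D \<le> F" unfolding F_def using bdd by (rule cSup_upper)
      thus False using FD by simp
    qed
  qed
qed



definition Amat :: "nat \<Rightarrow> real \<Rightarrow> real \<Rightarrow> real \<Rightarrow> real mat" where
  "Amat N \<delta> \<beta> \<theta> = 1\<^sub>m (N - 1) - U_mat N \<delta> \<beta> \<theta>"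

definition cc :: "nat \<Rightarrow> nat \<Rightarrow> real" where
  "cc N i = real i * (real N - real i) / (real N)^2"

lemma Amat_carrier: "Amat N \<delta> \<beta> \<theta> \<in> carrier_mat (N - 1) (N - 1)"
  unfolding Amat_def U_mat_def by (auto intro!: minus_carrier_mat)

lemma inv_one_plus_exp: "1 / (1 + exp (x::real)) = exp (-x) / (1 + exp (-x))"
proof -
  have "exp (-x) * (1 + exp x) = exp (-x) + 1" by (simp add: algebra_simps exp_minus_inverse)
  moreover have "1 + exp x > 0" "1 + exp (-x) > 0" by (auto intro: add_pos_pos)
  ultimately show ?thesis by (simp add: field_simps)
qed

lemma Amat_entry:
  fixes N a b :: nat and \<delta> \<beta> \<theta> :: real
  assumes "a < N - 1" "b < N - 1"
  defines "r \<equiv> exp (-(\<beta> * (\<theta> + \<delta>)))"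
  shows "Amat N \<delta> \<beta> \<theta> $$ (a, b) = (if a = b then cc N (a+1) else 0)
     - (if b = a + 1 then cc N (a+1) / (1 + r) else 0)
     - (if a = b + 1 then cc N (a+1) * r / (1 + r) else 0)"
proof -
  define x where "x = \<beta> * (\<theta> + \<delta>)"
  have r: "r = exp (-x)" by (simp add: r_def x_def)
  have d: "1 / (1 + exp x) = r / (1 + r)" using inv_one_plus_exp[of x] r by simp
  have up: "cc N (a+1) / (1 + exp (-x)) = cc N (a+1) / (1 + r)" using r by simp
  have dn: "cc N (a+1) / (1 + exp x) = cc N (a+1) * r / (1 + r)"
    using d by (metis times_divide_eq_right mult_1_right)
  have sum1: "cc N (a+1) / (1 + r) + cc N (a+1) * r / (1 + r) = cc N (a+1)"
  proof -
    have p: "1 + r > 0" using r by (simp add: add_pos_pos)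
    have "cc N (a+1) / (1 + r) + cc N (a+1) * r / (1 + r) = (cc N (a+1) * (1 + r)) / (1 + r)"
      by (simp add: add_divide_distrib[symmetric] algebra_simps)
    also have "\<dots> = cc N (a+1)" using p by simp
    finally show ?thesis .
  qed
  have ent: "Amat N \<delta> \<beta> \<theta> $$ (a, b) = (if a = b then 1 else 0) - trans_u N \<delta> \<beta> \<theta> (a+1) (b+1)"
    using assms by (simp add: Amat_def U_mat_def)
  show ?thesis unfolding ent trans_u_def Let_def x_def[symmetric]
    using up dn sum1 by (auto simp: cc_def)
qed

lemma col_sum:
  fixes N b :: nat and \<delta> \<beta> \<theta> :: real and y :: "nat \<Rightarrow> real"
  assumes b: "b < N - 1"
  defines "r \<equiv> exp (-(\<beta> * (\<theta> + \<delta>)))"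
  shows "(\<Sum>a<N-1. y a * Amat N \<delta> \<beta> \<theta> $$ (a,b)) = cc N (b+1) * y b
     - (if 1 \<le> b then cc N b / (1 + r) * y (b - 1) else 0)
     - (if b + 1 < N - 1 then cc N (b+2) * r / (1 + r) * y (b + 1) else 0)"
proof -
  have "(\<Sum>a<N-1. y a * Amat N \<delta> \<beta> \<theta> $$ (a,b)) =
     (\<Sum>a<N-1. (if a = b then cc N (b+1) * y b else 0)
        - (if a + 1 = b then cc N b / (1 + r) * y (b - 1) else 0)
        - (if a = b + 1 then cc N (b+2) * r / (1 + r) * y (b + 1) else 0))"
  proof (rule sum.cong)
    fix a assume "a \<in> {..<N-1}"
    hence a: "a < N - 1" by simp
    show "y a * Amat N \<delta> \<beta> \<theta> $$ (a,b) = (if a = b then cc N (b+1) * y b else 0)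
        - (if a + 1 = b then cc N b / (1 + r) * y (b - 1) else 0)
        - (if a = b + 1 then cc N (b+2) * r / (1 + r) * y (b + 1) else 0)"
      using b unfolding Amat_entry[OF a b] r_def[symmetric]
      by auto
  qed simp
  also have "\<dots> = cc N (b+1) * y b
     - (\<Sum>a<N-1. if a + 1 = b then cc N b / (1 + r) * y (b - 1) else 0)
     - (if b + 1 < N - 1 then cc N (b+2) * r / (1 + r) * y (b + 1) else 0)"
    using b by (simp add: sum_subtractf)
  also have "(\<Sum>a<N-1. if a + 1 = b then cc N b / (1 + r) * y (b - 1) else 0)
      = (if 1 \<le> b then cc N b / (1 + r) * y (b - 1) else 0)"
  proof (cases b)
    case 0 thus ?thesis by simp
  next
    case (Suc b')
    have "(\<Sum>a<N-1. if a + 1 = b then cc N b / (1 + r) * y (b - 1) else 0)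
       = (\<Sum>a<N-1. if a = b' then cc N b / (1 + r) * y (b - 1) else 0)"
      using Suc by (intro sum.cong) auto
    thus ?thesis using Suc b by simp
  qed
  finally show ?thesis .
qed



lemma cc_pos: "1 \<le> i \<Longrightarrow> i < N \<Longrightarrow> cc N i > 0"
  unfolding cc_def by (auto intro!: divide_pos_pos mult_pos_pos)

lemma kernel_trivial:
  fixes N :: nat and \<delta> \<beta> \<theta> :: real
  assumes N: "N \<ge> 3" and y: "y \<in> carrier_vec (N - 1)"
    and ker: "transpose_mat (Amat N \<delta> \<beta> \<theta>) *\<^sub>v y = 0\<^sub>v (N - 1)"
  shows "y = 0\<^sub>v (N - 1)"
proof -
  define n where "n = N - 1"
  define r where "r = exp (-(\<beta> * (\<theta> + \<delta>)))"
  have r0: "r > 0" by (simp add: r_def)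
  have n2: "n \<ge> 2" using N by (simp add: n_def)
  have A: "Amat N \<delta> \<beta> \<theta> \<in> carrier_mat n n" using Amat_carrier by (simp add: n_def)
  have colz: "(\<Sum>a<n. y $ a * Amat N \<delta> \<beta> \<theta> $$ (a,b)) = 0" if b: "b < n" for b
  proof -
    have "(transpose_mat (Amat N \<delta> \<beta> \<theta>) *\<^sub>v y) $ b = 0" using ker b by (simp add: n_def)
    moreover have "(transpose_mat (Amat N \<delta> \<beta> \<theta>) *\<^sub>v y) $ b = (\<Sum>a<n. y $ a * Amat N \<delta> \<beta> \<theta> $$ (a,b))"
      using A b y by (auto simp: scalar_prod_def atLeast0LessThan n_def mult.commute intro!: sum.cong)
    ultimately show ?thesis by simp
  qed
  define al where "al j = (if 1 \<le> j \<and> j \<le> n then cc N j * y $ (j - 1) else 0)" for j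
  have rec: "(1 + r) * al j = al (j - 1) + r * al (j + 1)" if j: "1 \<le> j" "j \<le> n" for j
  proof -
    define b where "b = j - 1"
    have b: "b < n" "j = b + 1" using j by (auto simp: b_def)
    have "cc N (b+1) * y $ b - (if 1 \<le> b then cc N b / (1 + r) * y $ (b - 1) else 0)
       - (if b + 1 < N - 1 then cc N (b+2) * r / (1 + r) * y $ (b + 1) else 0) = 0"
    proof -
      have bN: "b < N - 1" using b by (simp add: n_def)
      have z: "(\<Sum>a<N-1. y $ a * Amat N \<delta> \<beta> \<theta> $$ (a,b)) = 0" using colz[OF b(1)] by (simp add: n_def)
      show ?thesis using col_sum[OF bN, of "\<lambda>a. y $ a" \<delta> \<beta> \<theta>] z unfolding r_def by linarith
    qed
    hence "al (b+1) - al b / (1 + r) - r * al (b + 2) / (1 + r) = 0"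
      using b by (auto simp: al_def n_def)
    moreover have p: "1 + r > 0" using r0 by simp
    moreover have "(1 + r) * (al (b+1) - al b / (1 + r) - r * al (b + 2) / (1 + r))
      = (1 + r) * al (b+1) - al b - r * al (b + 2)"
      using p by (simp add: right_diff_distrib)
    ultimately show ?thesis using b by simp
  qed
  have dif: "al (j + 1) - al j = al 1 / r^j" if "j \<le> n" for j
    using that
  proof (induction j)
    case 0 thus ?case by (simp add: al_def)
  next
    case (Suc j)
    have "(1 + r) * al (Suc j) = al j + r * al (Suc j + 1)" using rec[of "Suc j"] Suc by simp
    hence "r * (al (Suc j + 1) - al (Suc j)) = al (Suc j) - al j" by (simp add: algebra_simps)
    hence "al (Suc j + 1) - al (Suc j) = (al (Suc j) - al j) / r" using r0 by (simp add: field_simps)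
    thus ?case using Suc by simp
  qed
  have alSS: "al j = al 1 * SS j (1/r)" if "j \<le> n + 1" for j
    using that
  proof (induction j)
    case 0 thus ?case by (simp add: al_def)
  next
    case (Suc j)
    have "al (Suc j) = al j + al 1 / r^j" using dif[of j] Suc by simp
    thus ?case using Suc by (simp add: SS_Suc power_one_over algebra_simps)
  qed
  have "al (n + 1) = 0" by (simp add: al_def)
  hence "al 1 * SS (n+1) (1/r) = 0" using alSS[of "n+1"] by simp
  moreover have "SS (n+1) (1/r) > 0" using r0 by (intro SS_pos) auto
  ultimately have a1: "al 1 = 0" by simp
  show ?thesis
  proof (rule eq_vecI)
    show "dim_vec y = dim_vec (0\<^sub>v (N - 1))" using y by simp
  next
    fix i assume "i < dim_vec (0\<^sub>v (N - 1))"
    hence i: "i < n" by (simp add: n_def)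
    have "al (i+1) = 0" using alSS[of "i+1"] a1 i by simp
    moreover have "cc N (i+1) > 0" using i by (intro cc_pos) (auto simp: n_def)
    ultimately show "y $ i = 0\<^sub>v (N - 1) $ i" using i by (simp add: al_def n_def)
  qed
qed

lemma Amat_inverse:
  fixes N :: nat and \<delta> \<beta> \<theta> :: real
  assumes N: "N \<ge> 3"
  shows "\<exists>B. mat_inverse (Amat N \<delta> \<beta> \<theta>) = Some B \<and> Amat N \<delta> \<beta> \<theta> * B = 1\<^sub>m (N-1)
    \<and> B \<in> carrier_mat (N-1) (N-1)"
proof -
  have A: "Amat N \<delta> \<beta> \<theta> \<in> carrier_mat (N-1) (N-1)" by (rule Amat_carrier)
  have AT: "transpose_mat (Amat N \<delta> \<beta> \<theta>) \<in> carrier_mat (N-1) (N-1)" using A by simp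
  have "Determinant.det (transpose_mat (Amat N \<delta> \<beta> \<theta>)) \<noteq> 0"
  proof
    assume "Determinant.det (transpose_mat (Amat N \<delta> \<beta> \<theta>)) = 0"
    then obtain v where v: "v \<in> carrier_vec (N-1)" "v \<noteq> 0\<^sub>v (N-1)"
      "transpose_mat (Amat N \<delta> \<beta> \<theta>) *\<^sub>v v = 0\<^sub>v (N-1)"
      unfolding det_0_iff_vec_prod_zero[OF AT] by blast
    from kernel_trivial[OF N v(1) v(3)] v(2) show False by simp
  qed
  hence "Determinant.det (Amat N \<delta> \<beta> \<theta>) \<noteq> 0" using det_transpose[OF A] by simp
  hence U: "Amat N \<delta> \<beta> \<theta> \<in> Units (ring_mat TYPE(real) (N-1) ())"
    by (rule det_non_zero_imp_unit[OF A])
  show ?thesis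
  proof (cases "mat_inverse (Amat N \<delta> \<beta> \<theta>)")
    case None
    have "Amat N \<delta> \<beta> \<theta> \<notin> Units (ring_mat TYPE(real) (N-1) ())" by (rule mat_inverse(1)[OF A None])
    thus ?thesis using U by simp
  next
    case (Some B)
    have "Amat N \<delta> \<beta> \<theta> * B = 1\<^sub>m (N-1) \<and> B * Amat N \<delta> \<beta> \<theta> = 1\<^sub>m (N-1) \<and> B \<in> carrier_mat (N-1) (N-1)"
      by (rule mat_inverse(2)[OF A Some])
    thus ?thesis using Some by auto
  qed
qed



lemma phi_int: assumes "r > 0" "m \<ge> 1"
  shows "(1 + r) * phi n m r - phi n (m + 1) r - r * phi n (m - 1) r = 0"
proof -
  have S: "SS (Suc n) r > 0" using SS_pos[of r "Suc n"] assms by simp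
  have e: "r * r^(m-1) = r^m" using assms(2) by (cases m) auto
  have "(1 + r) * ((1 + r) * (SS n r + r^m)) - (1 + r) * (SS n r + r^(m+1)) - r * ((1 + r) * (SS n r + r^(m-1))) = 0"
    using e by (simp add: algebra_simps)
  hence "((1 + r) * ((1 + r) * (SS n r + r^m)) - (1 + r) * (SS n r + r^(m+1)) - r * ((1 + r) * (SS n r + r^(m-1)))) / SS (Suc n) r = 0"
    by simp
  thus ?thesis unfolding phi_def using S by (simp add: diff_divide_distrib)
qed

lemma phi_b0: assumes "r > 0" "n \<ge> 2"
  shows "(1 + r) * phi n (n - 1) r - r * phi n (n - 2) r = 1 + r"
proof -
  have S: "SS (Suc n) r > 0" using SS_pos[of r "Suc n"] assms by simp
  have e: "r * r^(n-2) = r^(n-1)" "r * r^(n-1) = r^n" using assms(2) by (cases n; cases "n - 1"; auto)+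
  have "(1 + r) * ((1 + r) * (SS n r + r^(n-1))) - r * ((1 + r) * (SS n r + r^(n-2))) = (1 + r) * SS (Suc n) r"
    using e by (simp add: algebra_simps SS_Suc)
  hence "((1 + r) * ((1 + r) * (SS n r + r^(n-1))) - r * ((1 + r) * (SS n r + r^(n-2)))) / SS (Suc n) r = 1 + r"
    using S by simp
  thus ?thesis unfolding phi_def using S by (simp add: diff_divide_distrib)
qed

lemma phi_bn: assumes "r > 0"
  shows "(1 + r) * phi n 0 r - phi n 1 r = 1 + r"
proof -
  have S: "SS (Suc n) r > 0" using SS_pos[of r "Suc n"] assms by simp
  have "(1 + r) * ((1 + r) * (SS n r + 1)) - (1 + r) * (SS n r + r) = (1 + r) * SS (Suc n) r"
    by (simp add: algebra_simps SS_Suc')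
  hence "((1 + r) * ((1 + r) * (SS n r + 1)) - (1 + r) * (SS n r + r)) / SS (Suc n) r = 1 + r"
    using S by simp
  thus ?thesis unfolding phi_def using S by (simp add: diff_divide_distrib)
qed

definition vv :: "nat \<Rightarrow> real \<Rightarrow> nat \<Rightarrow> real" where
  "vv N r a = phi (N - 1) (N - 1 - (a + 1)) r / cc N (a + 1)"

lemma vv_col:
  fixes N c :: nat and \<delta> \<beta> \<theta> :: real
  assumes N: "N \<ge> 3" and c: "c < N - 1"
  defines "r \<equiv> exp (-(\<beta> * (\<theta> + \<delta>)))"
  shows "(\<Sum>a<N-1. vv N r a * Amat N \<delta> \<beta> \<theta> $$ (a,c)) = (if c = 0 then 1 else 0) + (if c = N - 2 then 1 else 0)"
proof -
  define n where "n = N - 1"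
  have n2: "n \<ge> 2" using N by (simp add: n_def)
  have r0: "r > 0" by (simp add: r_def)
  define ph where "ph j = phi n (n - j) r" for j
  have ccv: "cc N j * vv N r (j - 1) = ph j" if "1 \<le> j" "j \<le> n" for j
  proof -
    have "cc N j > 0" using that by (intro cc_pos) (auto simp: n_def)
    thus ?thesis using that by (simp add: vv_def ph_def n_def)
  qed
  have "(\<Sum>a<N-1. vv N r a * Amat N \<delta> \<beta> \<theta> $$ (a,c)) = cc N (c+1) * vv N r c
     - (if 1 \<le> c then cc N c / (1 + r) * vv N r (c - 1) else 0)
     - (if c + 1 < N - 1 then cc N (c+2) * r / (1 + r) * vv N r (c + 1) else 0)"
    unfolding r_def by (rule col_sum[OF c])
  also have "\<dots> = ph (c+1) - (if 1 \<le> c then ph c / (1 + r) else 0)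
     - (if c + 1 < n then r * ph (c + 2) / (1 + r) else 0)"
  proof -
    have e0: "cc N (c+1) * vv N r c = ph (c+1)" using ccv[of "c+1"] c by (simp add: n_def)
    have e1: "cc N c / (1 + r) * vv N r (c - 1) = ph c / (1 + r)" if "1 \<le> c"
    proof -
      have "cc N c * vv N r (c - 1) = ph c" using ccv[of c] c that by (simp add: n_def)
      thus ?thesis by (metis times_divide_eq_left)
    qed
    have e2: "cc N (c+2) * r / (1 + r) * vv N r (c + 1) = r * ph (c + 2) / (1 + r)" if "c + 1 < n"
    proof -
      have "cc N (c+2) * vv N r (c + 1) = ph (c+2)" using ccv[of "c+2"] that by (simp add: n_def)
      moreover have "cc N (c+2) * r / (1 + r) * vv N r (c + 1) = r * (cc N (c+2) * vv N r (c + 1)) / (1 + r)"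
        by (simp add: mult_ac)
      ultimately show ?thesis by simp
    qed
    have "(if 1 \<le> c then cc N c / (1 + r) * vv N r (c - 1) else 0) = (if 1 \<le> c then ph c / (1 + r) else 0)"
      using e1 by simp
    moreover have "(if c + 1 < N - 1 then cc N (c+2) * r / (1 + r) * vv N r (c + 1) else 0)
       = (if c + 1 < n then r * ph (c + 2) / (1 + r) else 0)"
      using e2 by (simp add: n_def)
    ultimately show ?thesis using e0 by simp
  qed
  also have "\<dots> = (if c = 0 then 1 else 0) + (if c = N - 2 then 1 else 0)"
  proof -
    have p: "1 + r > 0" using r0 by simp
    have key: "(1 + r) * ph (c+1) - (if 1 \<le> c then ph c else 0) - (if c + 1 < n then r * ph (c + 2) else 0)
       = (1 + r) * ((if c = 0 then 1 else 0) + (if c = N - 2 then 1 else 0))"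
    proof (cases "c = 0")
      case True
      have "c + 1 < n" using True n2 by simp
      thus ?thesis using True phi_b0[OF r0 n2] n2 by (simp add: ph_def n_def numeral_eq_Suc)
    next
      case c0: False
      show ?thesis
      proof (cases "c = N - 2")
        case True
        hence "c + 1 = n" "n - c = 1" using n2 by (auto simp: n_def)
        thus ?thesis using True c0 phi_bn[OF r0, of n] by (simp add: ph_def)
      next
        case False
        hence cn: "c + 1 < n" "1 \<le> c" using c c0 by (auto simp: n_def)
        define m where "m = n - (c + 1)"
        have m1: "m \<ge> 1" "n - c = m + 1" "n - (c + 2) = m - 1" "n - Suc c = m" using cn by (auto simp: m_def)
        show ?thesis using phi_int[OF r0 m1(1), of n] cn False c0 m1
          by (simp add: ph_def m_def[symmetric])
      qed
    qed
    have "ph (c+1) - (if 1 \<le> c then ph c / (1 + r) else 0) - (if c + 1 < n then r * ph (c + 2) / (1 + r) else 0)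
      = ((1 + r) * ph (c+1) - (if 1 \<le> c then ph c else 0) - (if c + 1 < n then r * ph (c + 2) else 0)) / (1 + r)"
      using p by (simp add: diff_divide_distrib)
    also have "\<dots> = (if c = 0 then 1 else 0) + (if c = N - 2 then 1 else 0)"
      unfolding key using p by simp
    finally show ?thesis .
  qed
  finally show ?thesis .
qed



lemma fund_rows:
  fixes N b :: nat and \<delta> \<beta> \<theta> :: real
  assumes N: "N \<ge> 3" and b: "b < N - 1"
  shows "fund_mat N \<delta> \<beta> \<theta> $$ (0, b) + fund_mat N \<delta> \<beta> \<theta> $$ (N - 2, b) = vv N (exp (-(\<beta> * (\<theta> + \<delta>)))) b"
proof -
  define r where "r = exp (-(\<beta> * (\<theta> + \<delta>)))"
  define n where "n = N - 1"
  define A where "A = Amat N \<delta> \<beta> \<theta>"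
  obtain B where B: "mat_inverse A = Some B" "A * B = 1\<^sub>m n" "B \<in> carrier_mat n n"
    using Amat_inverse[OF N, of \<delta> \<beta> \<theta>] by (auto simp: A_def n_def)
  have F: "fund_mat N \<delta> \<beta> \<theta> = B" using B(1) by (simp add: fund_mat_def A_def Amat_def)
  have Ac: "A \<in> carrier_mat n n" using Amat_carrier by (simp add: A_def n_def)
  have bn: "b < n" using b by (simp add: n_def)
  have AB: "(\<Sum>c<n. A $$ (a,c) * B $$ (c,b)) = (if a = b then 1 else 0)" if a: "a < n" for a
  proof -
    have "(A * B) $$ (a,b) = (\<Sum>c<n. A $$ (a,c) * B $$ (c,b))"
      using Ac B(3) a bn by (auto simp: scalar_prod_def atLeast0LessThan intro!: sum.cong)
    thus ?thesis using B(2) a bn by simp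
  qed
  have u: "(\<Sum>a<n. vv N r a * A $$ (a,c)) = (if c = 0 then 1 else 0) + (if c = N - 2 then 1 else 0)"
    if "c < n" for c
    using vv_col[OF N, where c=c and \<delta>=\<delta> and \<beta>=\<beta> and \<theta>=\<theta>] that by (simp add: A_def n_def r_def)
  have "(\<Sum>c<n. (\<Sum>a<n. vv N r a * A $$ (a,c)) * B $$ (c,b)) = (\<Sum>a<n. vv N r a * (\<Sum>c<n. A $$ (a,c) * B $$ (c,b)))"
  proof -
    have "(\<Sum>c<n. (\<Sum>a<n. vv N r a * A $$ (a,c)) * B $$ (c,b)) = (\<Sum>c<n. \<Sum>a<n. vv N r a * A $$ (a,c) * B $$ (c,b))"
      by (simp add: sum_distrib_right)
    also have "\<dots> = (\<Sum>a<n. \<Sum>c<n. vv N r a * A $$ (a,c) * B $$ (c,b))"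
      by (rule sum.swap)
    also have "\<dots> = (\<Sum>a<n. vv N r a * (\<Sum>c<n. A $$ (a,c) * B $$ (c,b)))"
      by (simp add: sum_distrib_left mult.assoc)
    finally show ?thesis .
  qed
  also have "\<dots> = (\<Sum>a<n. vv N r a * (if a = b then 1 else 0))"
    by (rule sum.cong) (auto simp: AB)
  also have "\<dots> = vv N r b" using bn by (simp add: if_distrib cong: if_cong)
  finally have L: "(\<Sum>c<n. (\<Sum>a<n. vv N r a * A $$ (a,c)) * B $$ (c,b)) = vv N r b" .
  have "(\<Sum>c<n. (\<Sum>a<n. vv N r a * A $$ (a,c)) * B $$ (c,b))
     = (\<Sum>c<n. (if c = 0 then B $$ (c,b) else 0) + (if c = N - 2 then B $$ (c,b) else 0))"
    by (rule sum.cong) (auto simp: u)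
  also have "\<dots> = B $$ (0,b) + B $$ (N - 2, b)"
    using N by (simp add: sum.distrib n_def)
  finally show ?thesis using L F by (simp add: r_def)
qed

lemma pair_sum:
  assumes N: "N \<ge> 3" and i: "1 \<le> i" "i \<le> N - 1"
  shows "n_entry N \<delta> \<beta> \<theta> 1 i + n_entry N \<delta> \<beta> \<theta> (N - 1) i
     = phi (N - 1) (N - 1 - i) (exp (-(\<beta> * (\<theta> + \<delta>)))) / cc N i"
proof -
  have "i - 1 < N - 1" using i by auto
  from fund_rows[OF N this, of \<delta> \<beta> \<theta>] show ?thesis
    using i N by (simp add: n_entry_def vv_def numeral_eq_Suc)
qed

lemma E_r_formula: assumes N: "N \<ge> 3"
  shows "E_r N \<delta> \<beta> \<theta> = \<theta> * (real N ^ 2 / 2) * Gs (N - 1) (\<lambda>i. 1 / (real N - real i)) (exp (-(\<beta> * (\<theta> + \<delta>))))"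
proof -
  define r where "r = exp (-(\<beta> * (\<theta> + \<delta>)))"
  have "(\<Sum>i = 1..N - 1. (n_entry N \<delta> \<beta> \<theta> 1 i + n_entry N \<delta> \<beta> \<theta> (N - 1) i) * real i)
      = (\<Sum>i = 1..N - 1. real N ^ 2 * (1 / (real N - real i) * phi (N - 1) (N - 1 - i) r))"
  proof (rule sum.cong)
    fix i assume i: "i \<in> {1..N-1}"
    have iN: "real i < real N" "real i > 0" using i by auto
    have i1: "1 \<le> i" "i \<le> N - 1" using i by auto
    show "(n_entry N \<delta> \<beta> \<theta> 1 i + n_entry N \<delta> \<beta> \<theta> (N - 1) i) * real i
        = real N ^ 2 * (1 / (real N - real i) * phi (N - 1) (N - 1 - i) r)"
    proof -
      have c: "real i / cc N i = real N ^ 2 / (real N - real i)"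
        using iN by (simp add: cc_def divide_simps)
      have "phi (N - 1) (N - 1 - i) r / cc N i * real i = phi (N - 1) (N - 1 - i) r * (real i / cc N i)"
        by simp
      thus ?thesis unfolding pair_sum[OF N i1] r_def[symmetric] c by simp
    qed
  qed simp
  thus ?thesis unfolding E_r_def Gs_def r_def[symmetric] by (simp add: sum_distrib_left mult.assoc)
qed

lemma E_p_formula: assumes N: "N \<ge> 3"
  shows "E_p N \<delta> \<beta> \<theta> = \<theta> * (real N ^ 2 / 2) * Gs (N - 1) (\<lambda>i. 1 / real i) (exp (-(\<beta> * (\<theta> + \<delta>))))"
proof -
  define r where "r = exp (-(\<beta> * (\<theta> + \<delta>)))"
  have "(\<Sum>i = 1..N - 1. (n_entry N \<delta> \<beta> \<theta> 1 i + n_entry N \<delta> \<beta> \<theta> (N - 1) i) * (real N - real i))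
      = (\<Sum>i = 1..N - 1. real N ^ 2 * (1 / real i * phi (N - 1) (N - 1 - i) r))"
  proof (rule sum.cong)
    fix i assume i: "i \<in> {1..N-1}"
    have iN: "real i < real N" "real i > 0" using i by auto
    have i1: "1 \<le> i" "i \<le> N - 1" using i by auto
    show "(n_entry N \<delta> \<beta> \<theta> 1 i + n_entry N \<delta> \<beta> \<theta> (N - 1) i) * (real N - real i)
        = real N ^ 2 * (1 / real i * phi (N - 1) (N - 1 - i) r)"
    proof -
      have c: "(real N - real i) / cc N i = real N ^ 2 / real i"
        using iN by (simp add: cc_def divide_simps)
      have "phi (N - 1) (N - 1 - i) r / cc N i * (real N - real i) = phi (N - 1) (N - 1 - i) r * ((real N - real i) / cc N i)"
        by simp
      thus ?thesis unfolding pair_sum[OF N i1] r_def[symmetric] c by simp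
    qed
  qed simp
  thus ?thesis unfolding E_p_def Gs_def r_def[symmetric] by (simp add: sum_distrib_left mult.assoc)
qed



lemma gen_main:
  fixes N :: nat and f :: "nat \<Rightarrow> real" and K :: real and E :: "nat \<Rightarrow> real \<Rightarrow> real \<Rightarrow> real \<Rightarrow> real"
  assumes N: "N \<ge> 3" and fpos: "\<And>i. 1 \<le> i \<Longrightarrow> i \<le> N - 1 \<Longrightarrow> f i > 0" and K: "K > 0"
    and Eq: "\<And>\<delta> \<beta> \<theta>. E N \<delta> \<beta> \<theta> = \<theta> * K * Gs (N - 1) f (exp (-(\<beta> * (\<theta> + \<delta>))))"
  shows "\<exists>F > 0. \<forall>\<delta> < 0.
     (\<forall>\<beta>. 0 < \<beta> \<and> \<beta> \<le> - F / \<delta> \<longrightarrow>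
        mono (E N \<delta> \<beta>) \<and>
        (\<forall>\<theta>\<^sub>0. (INF \<theta>\<in>{\<theta>\<^sub>0..}. E N \<delta> \<beta> \<theta>) = E N \<delta> \<beta> \<theta>\<^sub>0 \<and> (\<forall>\<theta>\<ge>\<theta>\<^sub>0. E N \<delta> \<beta> \<theta>\<^sub>0 \<le> E N \<delta> \<beta> \<theta>))) \<and>
     (\<forall>\<beta>. \<beta> > - F / \<delta> \<longrightarrow>
        \<not> mono (E N \<delta> \<beta>) \<and> \<not> antimono (E N \<delta> \<beta>))"
proof -
  define n where "n = N - 1"
  have n2: "n \<ge> 2" using N by (simp add: n_def)
  have fp: "\<And>i. 1 \<le> i \<Longrightarrow> i \<le> n \<Longrightarrow> f i > 0" using fpos by (simp add: n_def)
  define g where "g x = Gs n f (exp (-x))" for x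
  define g' where "g' x = dGs n f (exp (-x)) * (- exp (-x))" for x
  have deriv: "(g has_real_derivative g' x) (at x)" for x
  proof -
    have d1: "((\<lambda>x. exp (-x)) has_real_derivative - exp (-x)) (at x)"
      by (auto intro!: derivative_eq_intros)
    have "SS (Suc n) (exp (-x)) \<noteq> 0" using SS_pos[of "exp (-x)" "Suc n"] by simp
    from DERIV_chain2[OF DERIV_Gs[OF this] d1] show ?thesis
      by (simp add: g_def[abs_def] g'_def)
  qed
  have pos: "g x > 0" for x unfolding g_def using n2 fp by (intro Gs_pos) auto
  have Kp: "g' x \<ge> -2 * exp (-x) * g x" for x
  proof -
    have "dGs n f (exp (-x)) \<le> 2 * Gs n f (exp (-x))" using fp by (intro dGs_le) auto
    hence "exp (-x) * dGs n f (exp (-x)) \<le> exp (-x) * (2 * Gs n f (exp (-x)))"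
      by (intro mult_left_mono) auto
    thus ?thesis by (simp add: g_def g'_def algebra_simps)
  qed
  have Km: "g' x \<le> 2 * exp x * g x" for x
  proof -
    define r where "r = exp (-x)"
    have r0: "r > 0" by (simp add: r_def)
    have ex: "exp x = 1 / r" by (simp add: r_def exp_minus inverse_eq_divide)
    have "r^2 * dGs n f r \<ge> -2 * Gs n f r" using fp r0 by (intro dGs_ge) auto
    hence "(r^2 * dGs n f r) / r \<ge> (-2 * Gs n f r) / r" using r0 by (intro divide_right_mono) auto
    moreover have "(r^2 * dGs n f r) / r = r * dGs n f r" using r0 by (simp add: power2_eq_square)
    ultimately have "- (r * dGs n f r) \<le> 2 * Gs n f r / r" by simp
    thus ?thesis by (simp add: g_def g'_def ex r_def[symmetric] algebra_simps)
  qed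
  have "\<exists>r>0. dGs n f r > 0"
  proof (rule dGs_pos_somewhere[OF n2])
    fix i assume "1 \<le> i" "i \<le> n" thus "f i > 0" by (rule fp)
  qed
  then obtain r0 where r0: "r0 > 0" "dGs n f r0 > 0" by blast
  define x0 where "x0 = - ln r0"
  have ex0: "exp (-x0) = r0" using r0 by (simp add: x0_def)
  have neg: "g' x0 < 0" unfolding g'_def ex0 using r0 by (simp add: mult_pos_pos)
  obtain F where F: "F > 0" "\<And>D. D > 0 \<Longrightarrow> D \<le> F \<Longrightarrow> mono (\<lambda>t. t * g (t - D))"
      "\<And>D. D > 0 \<Longrightarrow> F < D \<Longrightarrow> \<not> mono (\<lambda>t. t * g (t - D))"
    using main_abstract[of g g' x0, OF deriv pos Kp Km neg] by blast
  have E': "E N \<delta> \<beta> \<theta> = (K / \<beta>) * ((\<beta> * \<theta>) * g (\<beta> * \<theta> - (- \<beta> * \<delta>)))" if "\<beta> > 0" for \<delta> \<beta> \<theta>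
  proof -
    have "\<beta> * \<theta> - (- \<beta> * \<delta>) = \<beta> * (\<theta> + \<delta>)" by (simp add: algebra_simps)
    thus ?thesis unfolding Eq g_def n_def using that by (simp add: field_simps)
  qed
  have monoeq: "mono (E N \<delta> \<beta>) \<longleftrightarrow> mono (\<lambda>t. t * g (t - (- \<beta> * \<delta>)))" if b: "\<beta> > 0" for \<delta> \<beta>
  proof
    assume m: "mono (E N \<delta> \<beta>)"
    show "mono (\<lambda>t. t * g (t - (- \<beta> * \<delta>)))"
    proof (rule monoI)
      fix s t :: real assume st: "s \<le> t"
      have "E N \<delta> \<beta> (s / \<beta>) \<le> E N \<delta> \<beta> (t / \<beta>)" using m st b by (intro monoD[OF m]) (simp add: divide_right_mono)
      hence "(K / \<beta>) * (s * g (s - (- \<beta> * \<delta>))) \<le> (K / \<beta>) * (t * g (t - (- \<beta> * \<delta>)))"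
        unfolding E'[OF b] using b by simp
      moreover have kb: "K / \<beta> > 0" using K b by simp
      ultimately show "s * g (s - (- \<beta> * \<delta>)) \<le> t * g (t - (- \<beta> * \<delta>))"
        using mult_le_cancel_left_pos[OF kb] by blast
    qed
  next
    assume m: "mono (\<lambda>t. t * g (t - (- \<beta> * \<delta>)))"
    show "mono (E N \<delta> \<beta>)"
    proof (rule monoI)
      fix s t :: real assume st: "s \<le> t"
      have "(\<beta> * s) * g (\<beta> * s - (- \<beta> * \<delta>)) \<le> (\<beta> * t) * g (\<beta> * t - (- \<beta> * \<delta>))"
        using monoD[OF m, of "\<beta> * s" "\<beta> * t"] st b by simp
      thus "E N \<delta> \<beta> s \<le> E N \<delta> \<beta> t" unfolding E'[OF b] using K b
        by (intro mult_left_mono) auto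
    qed
  qed
  show ?thesis
  proof (rule exI[of _ F], rule conjI[OF F(1)], rule allI, rule impI, rule conjI; intro allI impI)
    fix \<delta> \<beta> :: real assume d: "\<delta> < 0" and b: "0 < \<beta> \<and> \<beta> \<le> - F / \<delta>"
    have D0: "- \<beta> * \<delta> > 0" using d b by (simp add: mult_pos_neg)
    have DF: "- \<beta> * \<delta> \<le> F"
    proof -
      have "\<beta> * (- \<delta>) \<le> (- F / \<delta>) * (- \<delta>)" using b d by (intro mult_right_mono) auto
      thus ?thesis using d by simp
    qed
    have m: "mono (E N \<delta> \<beta>)" using monoeq[of \<beta> \<delta>] F(2)[OF D0 DF] b by simp
    show "mono (E N \<delta> \<beta>) \<and>
        (\<forall>\<theta>\<^sub>0. (INF \<theta>\<in>{\<theta>\<^sub>0..}. E N \<delta> \<beta> \<theta>) = E N \<delta> \<beta> \<theta>\<^sub>0 \<and> (\<forall>\<theta>\<ge>\<theta>\<^sub>0. E N \<delta> \<beta> \<theta>\<^sub>0 \<le> E N \<delta> \<beta> \<theta>))"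
    proof (intro conjI allI impI m)
      fix \<theta>0 :: real
      show "(INF \<theta>\<in>{\<theta>0..}. E N \<delta> \<beta> \<theta>) = E N \<delta> \<beta> \<theta>0"
        by (rule cInf_eq_minimum) (auto intro: monoD[OF m])
    next
      fix \<theta>0 \<theta> :: real assume "\<theta> \<ge> \<theta>0"
      thus "E N \<delta> \<beta> \<theta>0 \<le> E N \<delta> \<beta> \<theta>" by (rule monoD[OF m])
    qed
  next
    fix \<delta> \<beta> :: real assume d: "\<delta> < 0" and b: "\<beta> > - F / \<delta>"
    have FD: "- F / \<delta> > 0" using F(1) d by (simp add: divide_pos_neg)
    hence b0: "\<beta> > 0" using b by simp
    have DF: "F < - \<beta> * \<delta>"
    proof -
      have "(- F / \<delta>) * (- \<delta>) < \<beta> * (- \<delta>)" using b d by (intro mult_strict_right_mono) auto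
      thus ?thesis using d by simp
    qed
    have D0: "- \<beta> * \<delta> > 0" using FD DF F(1) by linarith
    have nm: "\<not> mono (E N \<delta> \<beta>)" using monoeq[OF b0, of \<delta>] F(3)[OF D0 DF] by simp
    have na: "\<not> antimono (E N \<delta> \<beta>)"
    proof
      assume a: "antimono (E N \<delta> \<beta>)"
      have "E N \<delta> \<beta> 1 \<le> E N \<delta> \<beta> 0" using antimonoD[OF a, of 0 1] by simp
      moreover have "E N \<delta> \<beta> 0 = 0" by (simp add: Eq)
      moreover have "E N \<delta> \<beta> 1 > 0" using pos[of "\<beta> * (1 + \<delta>)"] K
        by (simp add: Eq g_def n_def)
      ultimately show False by simp
    qed
    show "\<not> mono (E N \<delta> \<beta>) \<and> \<not> antimono (E N \<delta> \<beta>)" using nm na by simp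
  qed
qed

theorem theorem2:
  fixes N :: nat and E :: "nat \<Rightarrow> real \<Rightarrow> real \<Rightarrow> real \<Rightarrow> real"
  assumes "N \<ge> 3"
    and "E \<in> {E_r, E_p}"
  shows "\<exists>F > 0. \<forall>\<delta> < 0.
     (\<forall>\<beta>. 0 < \<beta> \<and> \<beta> \<le> - F / \<delta> \<longrightarrow>
        mono (E N \<delta> \<beta>) \<and>
        (\<forall>\<theta>\<^sub>0. (INF \<theta>\<in>{\<theta>\<^sub>0..}. E N \<delta> \<beta> \<theta>) = E N \<delta> \<beta> \<theta>\<^sub>0 \<and> (\<forall>\<theta>\<ge>\<theta>\<^sub>0. E N \<delta> \<beta> \<theta>\<^sub>0 \<le> E N \<delta> \<beta> \<theta>))) \<and>
     (\<forall>\<beta>. \<beta> > - F / \<delta> \<longrightarrow>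
        \<not> mono (E N \<delta> \<beta>) \<and> \<not> antimono (E N \<delta> \<beta>))"
proof -
  have K: "real N ^ 2 / 2 > 0" using assms(1) by simp
  from assms(2) consider "E = E_r" | "E = E_p" by blast
  thus ?thesis
  proof cases
    case 1
    show ?thesis unfolding 1
    proof (rule gen_main[OF assms(1) _ K])
      fix i assume "1 \<le> i" "i \<le> N - 1"
      thus "1 / (real N - real i) > 0" by simp
    next
      fix \<delta> \<beta> \<theta>
      show "E_r N \<delta> \<beta> \<theta> = \<theta> * (real N ^ 2 / 2) * Gs (N - 1) (\<lambda>i. 1 / (real N - real i)) (exp (- (\<beta> * (\<theta> + \<delta>))))"
        by (rule E_r_formula[OF assms(1)])
    qed
  next
    case 2
    show ?thesis unfolding 2
    proof (rule gen_main[OF assms(1) _ K])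
      fix i assume "1 \<le> i" "i \<le> N - 1"
      thus "1 / real i > 0" by simp
    next
      fix \<delta> \<beta> \<theta>
      show "E_p N \<delta> \<beta> \<theta> = \<theta> * (real N ^ 2 / 2) * Gs (N - 1) (\<lambda>i. 1 / real i) (exp (- (\<beta> * (\<theta> + \<delta>))))"
        by (rule E_p_formula[OF assms(1)])
    qed
  qed
qed

end
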